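(* For every $\epsilon>0$, the operator $$\hat H(\epsilon):=-\partial_t^2+\frac{t^2}{2(1+\epsilon t^2)^{1/2}}-\frac{1}{\sqrt2\,(1+\epsilon t^2)^{1/4}}$$ on $L^2(\mathbb{R},dt)$ satisfies $\hat H(\epsilon)\ge-\frac{\epsilon}{4}$. Consequently, for every $u>0$ the operator $H_u:=-\partial_v^2+\frac{v^2}{2(u^2+v^2)^{1/2}}-\frac{1}{\sqrt2(u^2+v^2)^{1/4}}$ on $L^2(\mathbb{R},dv)$ satisfies $H_u\ge-\frac{1}{4u^2}$.
   Context: $\hat H(\epsilon)$ and $H_u$ are the self-adjoint operators defined by the closures of their quadratic forms on $C_0^\infty(\mathbb{R})$; inequalities are in the sense of quadratic forms. (Under $v=u^{1/4}t$ one has $H_u=u^{-1/2}\hat H(u^{-3/2})$.) *)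

theory Defs
  imports "HOL-Analysis.Analysis"
begin

definition vderiv :: "(real \<Rightarrow> complex) \<Rightarrow> (real \<Rightarrow> complex)" where
  "vderiv f = (\<lambda>x. vector_derivative f (at x))"

definition smooth_compact :: "(real \<Rightarrow> complex) \<Rightarrow> bool" where
  "smooth_compact f \<longleftrightarrow>
     (\<forall>k::nat. \<forall>x::real. (vderiv ^^ k) f differentiable (at x)) \<and>
     (\<exists>R::real. \<forall>x::real. \<bar>x\<bar> > R \<longrightarrow> f x = 0)"

definition Vhat :: "real \<Rightarrow> real \<Rightarrow> real" where
  "Vhat eps t = t\<^sup>2 / (2 * sqrt (1 + eps * t\<^sup>2))
              - 1 / (sqrt 2 * (1 + eps * t\<^sup>2) powr (1/4))"

definition Vu :: "real \<Rightarrow> real \<Rightarrow> real" where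
  "Vu u v = v\<^sup>2 / (2 * sqrt (u\<^sup>2 + v\<^sup>2))
            - 1 / (sqrt 2 * (u\<^sup>2 + v\<^sup>2) powr (1/4))"

text \<open>Quadratic form of the Schroedinger operator -d^2/dt^2 + V on a test function f:
  integral of |f'|^2 + V |f|^2.\<close>
definition schr_form :: "(real \<Rightarrow> real) \<Rightarrow> (real \<Rightarrow> complex) \<Rightarrow> real" where
  "schr_form V f = (LINT t|lborel. (cmod (vderiv f t))\<^sup>2 + V t * (cmod (f t))\<^sup>2)"

definition L2_norm_sq :: "(real \<Rightarrow> complex) \<Rightarrow> real" where
  "L2_norm_sq f = (LINT t|lborel. (cmod (f t))\<^sup>2)"

end

theory Submission
  imports Defs
begin

lemma alg:
  fixes q r2 w a b t :: real
  assumes q: "q > 0" "q^4 = w" and r: "r2 > 0" "r2^2 = 2" and ab: "a > 0" "b > 0" and w: "w = a + b*t^2"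
  shows "(t^2/(2*q^2) - 1/(r2*q)) + (1/(r2*q) - b*t^2/(2*r2*q*w) - b*(a - b*t^2)/(4*w^2))
         - (t/(r2*q) - b*t/(4*w))^2 = -(b/4)*(a - 3*b*t^2/4)/w^2"
proof -
  have wp: "w > 0" using w ab by (smt (verit) mult_nonneg_nonneg zero_le_power2)
  have e1: "(t/(r2*q))^2 = t^2/(2*q^2)" using r by (simp add: power_divide power_mult_distrib)
  have e2: "2*(t/(r2*q))*(b*t/(4*w)) = b*t^2/(2*r2*q*w)" using q r wp by (simp add: field_simps power2_eq_square)
  have "(t/(r2*q) - b*t/(4*w))^2 = (t/(r2*q))^2 - 2*(t/(r2*q))*(b*t/(4*w)) + (b*t/(4*w))^2"
    by (simp add: power2_diff)
  then have "(t^2/(2*q^2) - 1/(r2*q)) + (1/(r2*q) - b*t^2/(2*r2*q*w) - b*(a - b*t^2)/(4*w^2))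
         - (t/(r2*q) - b*t/(4*w))^2 = - b*(a - b*t^2)/(4*w^2) - (b*t/(4*w))^2"
    using e1 e2 by simp
  also have "\<dots> = -(b/4)*(a - 3*b*t^2/4)/w^2" using wp by (simp add: field_simps power2_eq_square)
  finally show ?thesis .
qed


lemma supp_int:
  fixes h :: "real \<Rightarrow> real"
  assumes c: "continuous_on UNIV h" and z: "\<And>t. t \<notin> {a..b} \<Longrightarrow> h t = 0" and ab: "a \<le> b"
  shows "integrable lborel h" "integral\<^sup>L lborel h = (LBINT t=a..b. h t)"
proof -
  have eq: "h = (\<lambda>t. indicator {a..b} t *\<^sub>R h t)"
    using z by (auto simp: indicator_def fun_eq_iff)
  have si: "set_integrable lborel {a..b} h"
    by (rule borel_integrable_atLeastAtMost') (rule continuous_on_subset[OF c], simp)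
  then show "integrable lborel h" unfolding set_integrable_def using eq by metis
  show "integral\<^sup>L lborel h = (LBINT t=a..b. h t)"
  proof -
    have e2: "(\<lambda>t. indicator {a..b} t * h t) = h" using z by (auto simp: indicator_def fun_eq_iff)
    show ?thesis using ab by (simp add: interval_integral_Icc set_lebesgue_integral_def e2)
  qed
qed

lemma abstract:
  fixes V g g' :: "real \<Rightarrow> real" and c :: real and f :: "real \<Rightarrow> complex"
  assumes sc: "smooth_compact f" and Vc: "continuous_on UNIV V"
    and gd: "\<And>t. (g has_real_derivative g' t) (at t)" and g'c: "continuous_on UNIV g'"
    and W: "\<And>t. V t + g' t - (g t)^2 \<ge> -c"
  shows "schr_form V f \<ge> -c * L2_norm_sq f"
proof -
  define f' where "f' = vderiv f"
  have d0: "\<And>x. f differentiable at x" using sc unfolding smooth_compact_def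
    by (metis funpow_0)
  have d1: "\<And>x. f' differentiable at x"
  proof -
    fix x
    have "(vderiv ^^ 1) f differentiable at x" using sc unfolding smooth_compact_def by blast
    then show "f' differentiable at x" unfolding f'_def by simp
  qed
  obtain R where R: "\<And>x. \<bar>x\<bar> > R \<Longrightarrow> f x = 0" using sc unfolding smooth_compact_def by blast
  have hv: "\<And>x. (f has_vector_derivative f' x) (at x)"
    using d0 unfolding f'_def vderiv_def by (simp add: vector_derivative_works[symmetric])
  have contf: "continuous_on UNIV f"
    by (rule continuous_at_imp_continuous_on) (use d0 differentiable_imp_continuous_within in blast)
  have contf': "continuous_on UNIV f'"
    by (rule continuous_at_imp_continuous_on) (use d1 differentiable_imp_continuous_within in blast)
  have contg: "continuous_on UNIV g"
    by (rule continuous_at_imp_continuous_on) (use gd DERIV_isCont in blast)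
  have zero': "f' x = 0" if x: "\<bar>x\<bar> > R" for x
  proof -
    have "((\<lambda>_. 0::complex) has_vector_derivative 0) (at x)" by simp
    then have "(f has_vector_derivative 0) (at x)"
      by (rule has_vector_derivative_transform_within_open[where S="{y. R < \<bar>y\<bar>}"])
         (auto intro!: open_Collect_less continuous_intros simp: x R)
    then show ?thesis using hv[of x] by (metis vector_derivative_at)
  qed
  define a where "a = - (\<bar>R\<bar> + 1)"
  define b where "b = \<bar>R\<bar> + 1"
  have ab: "a \<le> b" unfolding a_def b_def by simp
  have out: "f t = 0 \<and> f' t = 0" if "t \<notin> {a..b}" for t
  proof -
    have "\<bar>t\<bar> > R" using that unfolding a_def b_def by auto
    then show ?thesis using R zero' by blast
  qed
  define N where "N t = (Re (f t))^2 + (Im (f t))^2" for t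
  define A where "A t = (Re (f' t) + g t * Re (f t))^2 + (Im (f' t) + g t * Im (f t))^2" for t
  define B where "B t = (V t + g' t - (g t)^2 + c) * N t" for t
  define D where "D t = g' t * N t + g t * (2 * Re (f t) * Re (f' t) + 2 * Im (f t) * Im (f' t))" for t
  define S where "S t = (cmod (f' t))^2 + V t * (cmod (f t))^2" for t
  define L where "L t = (cmod (f t))^2" for t
  have cRe: "continuous_on UNIV (\<lambda>t. Re (f t))" "continuous_on UNIV (\<lambda>t. Im (f t))"
    "continuous_on UNIV (\<lambda>t. Re (f' t))" "continuous_on UNIV (\<lambda>t. Im (f' t))"
    using contf contf' by (auto intro!: continuous_intros)
  have cA: "continuous_on UNIV A" unfolding A_def using cRe contg by (auto intro!: continuous_intros)
  have cB: "continuous_on UNIV B" unfolding B_def N_def using cRe contg Vc g'c by (auto intro!: continuous_intros)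
  have cD: "continuous_on UNIV D" unfolding D_def N_def using cRe contg g'c by (auto intro!: continuous_intros)
  have cS: "continuous_on UNIV S" unfolding S_def using contf contf' Vc by (auto intro!: continuous_intros)
  have cL: "continuous_on UNIV L" unfolding L_def using contf by (auto intro!: continuous_intros)
  have zA: "A t = 0" and zB: "B t = 0" and zD: "D t = 0" and zS: "S t = 0" and zL: "L t = 0"
    if "t \<notin> {a..b}" for t
    using out[OF that] by (auto simp: A_def B_def D_def S_def L_def N_def)
  note iA = supp_int[OF cA zA ab] and iB = supp_int[OF cB zB ab] and iD = supp_int[OF cD zD ab]
    and iS = supp_int[OF cS zS ab] and iL = supp_int[OF cL zL ab]
  have pw: "S t + c * L t = A t + B t - D t" for t
    unfolding S_def L_def A_def B_def D_def N_def cmod_power2 by (simp add: algebra_simps power2_eq_square)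
  have "(LINT t|lborel. S t) + c * (LINT t|lborel. L t) = (LINT t|lborel. S t + c * L t)"
    using iS(1) iL(1) by simp
  also have "\<dots> = (LINT t|lborel. A t + B t - D t)" by (simp add: pw)
  also have "\<dots> = (LINT t|lborel. A t) + (LINT t|lborel. B t) - (LINT t|lborel. D t)"
    using iA(1) iB(1) iD(1) by simp
  also have "(LINT t|lborel. D t) = 0"
  proof -
    define F where "F t = g t * N t" for t
    have "(LBINT t=a..b. D t) = F b - F a"
    proof (rule interval_integral_FTC_finite)
      show "continuous_on {min a b..max a b} D" using cD by (rule continuous_on_subset) simp
      fix x
      have "(F has_real_derivative D x) (at x)"
        unfolding F_def N_def D_def
        using gd[of x] has_field_derivative_Re[OF hv[of x]] has_field_derivative_Im[OF hv[of x]]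
        by (auto intro!: derivative_eq_intros hv simp: algebra_simps)
      then show "(F has_vector_derivative D x) (at x within {min a b..max a b})"
        by (simp add: has_real_derivative_iff_has_vector_derivative[symmetric] has_field_derivative_at_within)
    qed
    also have "\<dots> = 0"
    proof -
      have "f a = 0" "f b = 0" using R unfolding a_def b_def by auto
      then show ?thesis unfolding F_def N_def by simp
    qed
    finally show ?thesis using iD(2) by simp
  qed
  finally have eq: "(LINT t|lborel. S t) + c * (LINT t|lborel. L t) = (LINT t|lborel. A t) + (LINT t|lborel. B t)"
    by simp
  have "0 \<le> (LINT t|lborel. A t)" unfolding A_def by simp
  moreover have "0 \<le> (LINT t|lborel. B t)" unfolding B_def N_def
  proof (rule Bochner_Integration.integral_nonneg)
    fix t
    have "0 \<le> V t + g' t - (g t)^2 + c" using W[of t] by linarith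
    then show "0 \<le> (V t + g' t - (g t)^2 + c) * ((Re (f t))^2 + (Im (f t))^2)" by simp
  qed
  ultimately have "0 \<le> (LINT t|lborel. S t) + c * (LINT t|lborel. L t)" using eq by simp
  then show ?thesis unfolding schr_form_def L2_norm_sq_def S_def[symmetric] L_def[symmetric]
    by (simp add: S_def[abs_def] L_def[abs_def] f'_def)
qed

lemma alg2:
  fixes w q r al be t m :: real
  assumes wp: "w>0" and qp: "q>0" and rp: "r>0" and r2: "r^2=2" and m: "m = q/w" and w: "al + be*t^2 = w"
  shows "(r*q - t*(be*(t*m)*r)/2)/(r*q*(r*q)) - (be*(4*al+4*(be*t^2)) - be*t*(8*(t*be)))/((4*al+4*(be*t^2))*(4*al+4*(be*t^2)))
     = 1/(r*q) - be*t^2/(2*r*q*w) - be*(al - be*t^2)/(4*w^2)"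
proof -
  have h4: "4*al+4*(be*t^2) = 4*w" using w by simp
  have al: "al = w - be*t^2" using w by simp
  have "(r*q - t*(be*(t*m)*r)/2)/(r*q*(r*q)) = 1/(r*q) - be*t^2/(2*r*q*w)"
    using wp qp rp m by (simp add: field_simps power2_eq_square)
  moreover have "(be*(4*al+4*(be*t^2)) - be*t*(8*(t*be)))/((4*al+4*(be*t^2))*(4*al+4*(be*t^2))) = be*(al - be*t^2)/(4*w^2)"
    unfolding h4 using wp by (simp add: field_simps power2_eq_square al)
  ultimately show ?thesis by simp
qed

lemma deriv_g:
  fixes al be :: real assumes al: "al > 0" and be: "be > 0"
  shows "((\<lambda>t. t/(sqrt 2 * (al + be*t^2) powr (1/4)) - be*t/(4*(al + be*t^2))) has_real_derivative
     1/(sqrt 2 * (al + be*t^2) powr (1/4)) - be*t^2/(2 * sqrt 2 * (al + be*t^2) powr (1/4)*(al + be*t^2))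
       - be*(al - be*t^2)/(4*(al + be*t^2)^2)) (at t)"
proof -
  have pos: "\<And>x. 0 < al + be*x^2" using al be by (simp add: add_pos_nonneg)
  have pos4: "\<And>x. 4*al + 4*(be*x^2) \<noteq> 0" using pos by (metis distrib_left mult_eq_0_iff less_irrefl zero_neq_numeral)
  have qm0: "(al + be*t^2) powr (1/4 - 1) = (al + be*t^2) powr (1/4) / (al + be*t^2) powr 1" by (rule powr_diff)
  have qm: "(al + be*t^2) powr (-(3/4)) = (al + be*t^2) powr (1/4) / (al + be*t^2)" using qm0 pos[of t] by simp
  show ?thesis
    apply (auto intro!: derivative_eq_intros simp: pos pos4)
     apply (metis pos less_irrefl)
    apply (rule alg2)
    using pos[of t] qm by auto
qed

lemma concrete:
  fixes al be :: real and V :: "real \<Rightarrow> real"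
  assumes al: "al > 0" and be: "be > 0" and sc: "smooth_compact f"
    and V: "\<And>t. V t = t^2/(2 * sqrt (al + be*t^2)) - 1/(sqrt 2 * (al + be*t^2) powr (1/4))"
  shows "schr_form V f \<ge> -(be/(4*al)) * L2_norm_sq f"
proof (rule abstract[OF sc])
  have pos: "\<And>x. 0 < al + be*x^2" using al be by (simp add: add_pos_nonneg)
  have pos': "\<And>x. al + be*x^2 \<noteq> 0" using pos by (metis less_irrefl)
  show "continuous_on UNIV V" unfolding V[abs_def] using pos pos'
    by (auto intro!: continuous_intros)
  show "\<And>t. ((\<lambda>t. t/(sqrt 2 * (al + be*t^2) powr (1/4)) - be*t/(4*(al + be*t^2))) has_real_derivative
     1/(sqrt 2 * (al + be*t^2) powr (1/4)) - be*t^2/(2 * sqrt 2 * (al + be*t^2) powr (1/4)*(al + be*t^2))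
       - be*(al - be*t^2)/(4*(al + be*t^2)^2)) (at t)"
    by (rule deriv_g[OF al be])
  show "continuous_on UNIV (\<lambda>t. 1/(sqrt 2 * (al + be*t^2) powr (1/4)) - be*t^2/(2 * sqrt 2 * (al + be*t^2) powr (1/4)*(al + be*t^2))
       - be*(al - be*t^2)/(4*(al + be*t^2)^2))" using pos pos'
    by (auto intro!: continuous_intros)
  fix t
  define w where "w = al + be*t^2"
  define q where "q = w powr (1/4)"
  have wp: "w > 0" unfolding w_def using pos .
  have qp: "q > 0" unfolding q_def using wp by simp
  have q4: "q^4 = w" unfolding q_def using wp by (simp add: powr_power)
  have sq: "sqrt w = q^2" unfolding q_def using wp
    by (simp add: powr_power powr_half_sqrt[symmetric])
  have id: "V t + (1/(sqrt 2 * q) - be*t^2/(2 * sqrt 2 * q * w) - be*(al - be*t^2)/(4*w^2))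
      - (t/(sqrt 2 * q) - be*t/(4*w))^2 = -(be/4)*(al - 3*be*t^2/4)/w^2"
    unfolding V w_def[symmetric] q_def[symmetric] sq
    by (rule alg) (use qp q4 al be w_def in auto)
  have "(al - 3*be*t^2/4)/w^2 \<le> al/w^2"
    using wp be by (intro divide_right_mono) auto
  also have "\<dots> \<le> al/al^2"
  proof (rule divide_left_mono)
    show "al^2 \<le> w^2" using al wp unfolding w_def using be by (intro power_mono) (auto simp: add_increasing2)
  qed (use al wp in auto)
  also have "\<dots> = 1/al" by (simp add: power2_eq_square)
  finally have "(be/4) * ((al - 3*be*t^2/4)/w^2) \<le> (be/4) * (1/al)"
    using be by (intro mult_left_mono) auto
  then show "- (be/(4*al)) \<le> V t + (1/(sqrt 2 * (al + be*t^2) powr (1/4)) - be*t^2/(2 * sqrt 2 * (al + be*t^2) powr (1/4)*(al + be*t^2))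
       - be*(al - be*t^2)/(4*(al + be*t^2)^2)) - (t/(sqrt 2 * (al + be*t^2) powr (1/4)) - be*t/(4*(al + be*t^2)))^2"
    unfolding w_def[symmetric] q_def[symmetric] id by simp
qed

theorem proposition1:
  shows "(\<forall>eps::real. eps > 0 \<longrightarrow>
            (\<forall>\<phi>. smooth_compact \<phi> \<longrightarrow>
               schr_form (Vhat eps) \<phi> \<ge> - (eps / 4) * L2_norm_sq \<phi>))
       \<and> (\<forall>u::real. u > 0 \<longrightarrow>
            (\<forall>\<phi>. smooth_compact \<phi> \<longrightarrow>
               schr_form (Vu u) \<phi> \<ge> - (1 / (4 * u\<^sup>2)) * L2_norm_sq \<phi>))"
proof (intro conjI allI impI)
  fix eps :: real and \<phi> assume e: "eps > 0" and sc: "smooth_compact \<phi>"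
  have "schr_form (Vhat eps) \<phi> \<ge> -(eps/(4*1)) * L2_norm_sq \<phi>"
    by (rule concrete[OF _ e sc]) (simp_all add: Vhat_def)
  then show "schr_form (Vhat eps) \<phi> \<ge> - (eps / 4) * L2_norm_sq \<phi>" by simp
next
  fix u :: real and \<phi> assume u: "u > 0" and sc: "smooth_compact \<phi>"
  have "schr_form (Vu u) \<phi> \<ge> -(1/(4*u^2)) * L2_norm_sq \<phi>"
    by (rule concrete[OF _ _ sc]) (use u in \<open>simp_all add: Vu_def\<close>)
  then show "schr_form (Vu u) \<phi> \<ge> - (1 / (4 * u\<^sup>2)) * L2_norm_sq \<phi>" by simp
qed

end
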